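(* Let $\mathcal F=(X,F)$, $\mathcal G=(Y,G)$, $\mathcal H=(Z,H)$ be Bishop spaces. For $\lambda\in\mathrm{Mor}(\mathcal G,\mathcal H)$ let $\lambda^+:\mathrm{Mor}(\mathcal H,\mathcal F)\to\mathrm{Mor}(\mathcal G,\mathcal F)$, $\lambda^+(\phi):=\phi\circ\lambda$, and for $\mu\in\mathrm{Mor}(\mathcal H,\mathcal G)$ let $\mu^-:\mathrm{Mor}(\mathcal F,\mathcal H)\to\mathrm{Mor}(\mathcal F,\mathcal G)$, $\mu^-(\theta):=\mu\circ\theta$. Let ${}^+:\mathrm{Mor}(\mathcal G,\mathcal H)\to\mathrm{Mor}(\mathcal H\to\mathcal F,\mathcal G\to\mathcal F)$ be $\lambda\mapsto\lambda^+$ and ${}^-:\mathrm{Mor}(\mathcal H,\mathcal G)\to\mathrm{Mor}(\mathcal F\to\mathcal H,\mathcal F\to\mathcal G)$ be $\mu\mapsto\mu^-$. Then ${}^+\in\mathrm{Mor}(\mathcal G\to\mathcal H,(\mathcal H\to\mathcal F)\to(\mathcal G\to\mathcal F))$ and ${}^-\in\mathrm{Mor}(\mathcal H\to\mathcal G,(\mathcal F\to\mathcal H)\to(\mathcal F\to\mathcal G))$.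
   Context: Work in Bishop-style constructive mathematics. A Bishop topology on a set $X$ is a set $F$ of functions $X\to\mathbb R$ containing the constant functions, closed under addition, under composition with functions $\mathbb R\to\mathbb R$ uniformly continuous on every $[-n,n]$, and under uniform limits; $(X,F)$ is a Bishop space. For a set $F_0$ of functions $X\to\mathbb R$, $\bigvee F_0$ is the least Bishop topology containing $F_0$. A Bishop morphism $(X,F)\to(Y,G)$ is a function $h:X\to Y$ with $g\circ h\in F$ for all $g\in G$; $\mathrm{Mor}(\mathcal F,\mathcal G)$ is their set (equality pointwise). The (pointwise) exponential Bishop space is $\mathcal F\to\mathcal G=(\mathrm{Mor}(\mathcal F,\mathcal G),F\to G)$ where $F\to G=\bigvee\{\phi_{x,g}:x\in X,g\in G\}$ and $\phi_{x,g}(h)=g(h(x))$. *)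

theory Defs
  imports Complex_Main "HOL-Library.FuncSet"
begin

text \<open>Functions on a carrier X are represented extensionally: outside X they are
  undefined (FuncSet's restrict / extensional), so equality is pointwise on X.\<close>

definition Bu :: "(real \<Rightarrow> real) set" where
  "Bu = {\<phi>. \<forall>n::nat. uniformly_continuous_on {- real n .. real n} \<phi>}"

definition bishop_topology :: "'a set \<Rightarrow> ('a \<Rightarrow> real) set \<Rightarrow> bool" where
  "bishop_topology X F \<longleftrightarrow>
     F \<subseteq> extensional X \<and>
     (\<forall>c::real. restrict (\<lambda>x. c) X \<in> F) \<and>
     (\<forall>f\<in>F. \<forall>g\<in>F. restrict (\<lambda>x. f x + g x) X \<in> F) \<and>
     (\<forall>f\<in>F. \<forall>\<phi>\<in>Bu. restrict (\<lambda>x. \<phi> (f x)) X \<in> F) \<and>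
     (\<forall>f\<in>extensional X.
        (\<forall>e>0. \<exists>g\<in>F. \<forall>x\<in>X. \<bar>f x - g x\<bar> \<le> e) \<longrightarrow> f \<in> F)"

definition bishop_gen :: "'a set \<Rightarrow> ('a \<Rightarrow> real) set \<Rightarrow> ('a \<Rightarrow> real) set" where
  "bishop_gen X F0 = \<Inter> {F. bishop_topology X F \<and> F0 \<subseteq> F}"

definition Mor :: "'a set \<Rightarrow> ('a \<Rightarrow> real) set \<Rightarrow> 'b set \<Rightarrow> ('b \<Rightarrow> real) set \<Rightarrow> ('a \<Rightarrow> 'b) set" where
  "Mor X F Y G = {h \<in> X \<rightarrow>\<^sub>E Y. \<forall>g\<in>G. restrict (\<lambda>x. g (h x)) X \<in> F}"

definition exp_top :: "'a set \<Rightarrow> ('a \<Rightarrow> real) set \<Rightarrow> 'b set \<Rightarrow> ('b \<Rightarrow> real) set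
    \<Rightarrow> (('a \<Rightarrow> 'b) \<Rightarrow> real) set" where
  "exp_top X F Y G = bishop_gen (Mor X F Y G)
     {restrict (\<lambda>h. g (h x)) (Mor X F Y G) | x g. x \<in> X \<and> g \<in> G}"

end

theory Submission
  imports Defs
begin

lemma bt_ext: "bishop_topology X (extensional X)"
  unfolding bishop_topology_def by auto

lemma bt_gen:
  assumes "F0 \<subseteq> extensional X"
  shows "bishop_topology X (bishop_gen X F0)" "F0 \<subseteq> bishop_gen X F0"
proof -
  let ?S = "{F. bishop_topology X F \<and> F0 \<subseteq> F}"
  have ne: "extensional X \<in> ?S" using bt_ext assms by auto
  show "F0 \<subseteq> bishop_gen X F0" unfolding bishop_gen_def by auto
  have eq: "bishop_gen X F0 = \<Inter> ?S" unfolding bishop_gen_def ..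
  have "bishop_topology X (\<Inter> ?S)"
    unfolding bishop_topology_def[of X "\<Inter> ?S"]
  proof (intro conjI)
    show "\<Inter> ?S \<subseteq> extensional X" using ne by auto
    have bS: "\<And>F. F \<in> ?S \<Longrightarrow> bishop_topology X F" by blast
    show "\<forall>c. restrict (\<lambda>x. c) X \<in> \<Inter> ?S"
    proof (intro allI InterI)
      fix c :: real and F assume "F \<in> ?S"
      then show "restrict (\<lambda>x. c) X \<in> F" using bS unfolding bishop_topology_def by blast
    qed
    show "\<forall>f\<in>\<Inter> ?S. \<forall>g\<in>\<Inter> ?S. restrict (\<lambda>x. f x + g x) X \<in> \<Inter> ?S"
    proof (intro ballI InterI)
      fix f g F assume "f \<in> \<Inter> ?S" "g \<in> \<Inter> ?S" "F \<in> ?S"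
      then have "f \<in> F" "g \<in> F" "bishop_topology X F" by auto
      then show "restrict (\<lambda>x. f x + g x) X \<in> F" unfolding bishop_topology_def by blast
    qed
    show "\<forall>f\<in>\<Inter> ?S. \<forall>\<phi>\<in>Bu. restrict (\<lambda>x. \<phi> (f x)) X \<in> \<Inter> ?S"
    proof (intro ballI InterI)
      fix f \<phi> F assume "f \<in> \<Inter> ?S" "\<phi> \<in> Bu" "F \<in> ?S"
      then have "f \<in> F" "\<phi> \<in> Bu" "bishop_topology X F" by auto
      then show "restrict (\<lambda>x. \<phi> (f x)) X \<in> F" unfolding bishop_topology_def by blast
    qed
    show "\<forall>f\<in>extensional X. (\<forall>e>0. \<exists>g\<in>\<Inter> ?S. \<forall>x\<in>X. \<bar>f x - g x\<bar> \<le> e) \<longrightarrow> f \<in> \<Inter> ?S"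
    proof (intro ballI impI)
      fix f assume f: "f \<in> extensional X" and ap: "\<forall>e>0. \<exists>g\<in>\<Inter> ?S. \<forall>x\<in>X. \<bar>f x - g x\<bar> \<le> e"
      show "f \<in> \<Inter> ?S"
      proof
        fix F assume F: "F \<in> ?S"
        have "\<forall>e>0. \<exists>g\<in>F. \<forall>x\<in>X. \<bar>f x - g x\<bar> \<le> e"
        proof (intro allI impI)
          fix e :: real assume "e > 0"
          then obtain g where "g \<in> \<Inter> ?S" "\<forall>x\<in>X. \<bar>f x - g x\<bar> \<le> e" using ap by blast
          then show "\<exists>g\<in>F. \<forall>x\<in>X. \<bar>f x - g x\<bar> \<le> e" using F by blast
        qed
        then show "f \<in> F" using F f unfolding bishop_topology_def by blast
      qed
    qed
  qed
  then show "bishop_topology X (bishop_gen X F0)" using eq by simp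
qed

lemma mor_gen:
  assumes bt: "bishop_topology A FA" and h: "h \<in> A \<rightarrow>\<^sub>E B" and G0: "G0 \<subseteq> extensional B"
    and gen: "\<forall>g0\<in>G0. restrict (\<lambda>x. g0 (h x)) A \<in> FA"
  shows "h \<in> Mor A FA B (bishop_gen B G0)"
proof -
  define S where "S = {g \<in> extensional B. restrict (\<lambda>x. g (h x)) A \<in> FA}"
  have hB: "\<And>x. x \<in> A \<Longrightarrow> h x \<in> B" using h by auto
  have cst: "\<And>c. restrict (\<lambda>x. c) A \<in> FA" using bt unfolding bishop_topology_def by blast
  have add: "\<And>f g. f \<in> FA \<Longrightarrow> g \<in> FA \<Longrightarrow> restrict (\<lambda>x. f x + g x) A \<in> FA"
    using bt unfolding bishop_topology_def by blast
  have cmp: "\<And>f \<phi>. f \<in> FA \<Longrightarrow> \<phi> \<in> Bu \<Longrightarrow> restrict (\<lambda>x. \<phi> (f x)) A \<in> FA"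
    using bt unfolding bishop_topology_def by blast
  have lim: "\<And>f. f \<in> extensional A \<Longrightarrow> (\<forall>e>0. \<exists>g\<in>FA. \<forall>x\<in>A. \<bar>f x - g x\<bar> \<le> e) \<Longrightarrow> f \<in> FA"
    using bt unfolding bishop_topology_def by blast
  have "bishop_topology B S"
    unfolding bishop_topology_def
  proof (intro conjI)
    show "S \<subseteq> extensional B" unfolding S_def by auto
    show "\<forall>c. restrict (\<lambda>x. c) B \<in> S"
    proof
      fix c :: real
      have "restrict (\<lambda>x. restrict (\<lambda>x. c) B (h x)) A = restrict (\<lambda>x. c) A"
        using hB by (auto simp: restrict_def)
      then show "restrict (\<lambda>x. c) B \<in> S" using cst unfolding S_def by simp
    qed
    show "\<forall>f\<in>S. \<forall>g\<in>S. restrict (\<lambda>x. f x + g x) B \<in> S"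
    proof (intro ballI)
      fix f g assume f: "f \<in> S" and g: "g \<in> S"
      have "restrict (\<lambda>x. restrict (\<lambda>x. f x + g x) B (h x)) A
          = restrict (\<lambda>x. restrict (\<lambda>x. f (h x)) A x + restrict (\<lambda>x. g (h x)) A x) A"
        using hB by (auto simp: restrict_def)
      moreover have "restrict (\<lambda>x. restrict (\<lambda>x. f (h x)) A x + restrict (\<lambda>x. g (h x)) A x) A \<in> FA"
        using f g add unfolding S_def by blast
      ultimately show "restrict (\<lambda>x. f x + g x) B \<in> S" unfolding S_def by simp
    qed
    show "\<forall>f\<in>S. \<forall>\<phi>\<in>Bu. restrict (\<lambda>x. \<phi> (f x)) B \<in> S"
    proof (intro ballI)
      fix f \<phi> assume f: "f \<in> S" and p: "\<phi> \<in> Bu"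
      have "restrict (\<lambda>x. restrict (\<lambda>x. \<phi> (f x)) B (h x)) A
          = restrict (\<lambda>x. \<phi> (restrict (\<lambda>x. f (h x)) A x)) A"
        using hB by (auto simp: restrict_def)
      moreover have "restrict (\<lambda>x. \<phi> (restrict (\<lambda>x. f (h x)) A x)) A \<in> FA"
        using f p cmp unfolding S_def by blast
      ultimately show "restrict (\<lambda>x. \<phi> (f x)) B \<in> S" unfolding S_def by simp
    qed
    show "\<forall>f\<in>extensional B. (\<forall>e>0. \<exists>g\<in>S. \<forall>x\<in>B. \<bar>f x - g x\<bar> \<le> e) \<longrightarrow> f \<in> S"
    proof (intro ballI impI)
      fix f assume f: "f \<in> extensional B" and ap: "\<forall>e>0. \<exists>g\<in>S. \<forall>x\<in>B. \<bar>f x - g x\<bar> \<le> e"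
      have "\<forall>e>0. \<exists>g\<in>FA. \<forall>x\<in>A. \<bar>restrict (\<lambda>x. f (h x)) A x - g x\<bar> \<le> e"
      proof (intro allI impI)
        fix e :: real assume "e > 0"
        then obtain g where g: "g \<in> S" "\<forall>x\<in>B. \<bar>f x - g x\<bar> \<le> e" using ap by blast
        show "\<exists>g\<in>FA. \<forall>x\<in>A. \<bar>restrict (\<lambda>x. f (h x)) A x - g x\<bar> \<le> e"
          by (rule bexI[of _ "restrict (\<lambda>x. g (h x)) A"]) (use g hB in \<open>auto simp: S_def\<close>)
      qed
      then have "restrict (\<lambda>x. f (h x)) A \<in> FA" using lim by simp
      then show "f \<in> S" using f unfolding S_def by auto
    qed
  qed
  moreover have "G0 \<subseteq> S" using G0 gen unfolding S_def by auto
  ultimately have "bishop_gen B G0 \<subseteq> S" unfolding bishop_gen_def by auto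
  then show ?thesis using h unfolding Mor_def S_def by auto
qed

lemma gens_ext:
  "{restrict (\<lambda>h. g (h x)) (Mor X F Y G) | x g. x \<in> X \<and> g \<in> G} \<subseteq> extensional (Mor X F Y G)"
  by (clarsimp simp del: restrict_apply)

lemma exp_bt: "bishop_topology (Mor X F Y G) (exp_top X F Y G)"
proof -
  have "bishop_topology (Mor X F Y G) (bishop_gen (Mor X F Y G)
     {restrict (\<lambda>h. g (h x)) (Mor X F Y G) | x g. x \<in> X \<and> g \<in> G})"
    by (rule bt_gen(1)) (rule gens_ext)
  then show ?thesis unfolding exp_top_def .
qed

lemma exp_gen:
  assumes "x \<in> X" "g \<in> G"
  shows "restrict (\<lambda>h. g (h x)) (Mor X F Y G) \<in> exp_top X F Y G"
proof -
  have "{restrict (\<lambda>h. g (h x)) (Mor X F Y G) | x g. x \<in> X \<and> g \<in> G} \<subseteq> bishop_gen (Mor X F Y G)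
     {restrict (\<lambda>h. g (h x)) (Mor X F Y G) | x g. x \<in> X \<and> g \<in> G}"
    by (rule bt_gen(2)) (rule gens_ext)
  moreover have "restrict (\<lambda>h. g (h x)) (Mor X F Y G) \<in>
     {restrict (\<lambda>h. g (h x)) (Mor X F Y G) | x g. x \<in> X \<and> g \<in> G}"
    using assms by blast
  ultimately show ?thesis unfolding exp_top_def by (rule subsetD)
qed

lemma comp_mor:
  assumes l: "l \<in> Mor Y G Z H" and p: "\<phi> \<in> Mor Z H X F"
  shows "restrict (\<lambda>y. \<phi> (l y)) Y \<in> Mor Y G X F"
proof -
  have lZ: "\<And>y. y \<in> Y \<Longrightarrow> l y \<in> Z" using l by (auto simp: Mor_def)
  have "restrict (\<lambda>y. \<phi> (l y)) Y \<in> Y \<rightarrow>\<^sub>E X" using lZ p by (auto simp: Mor_def)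
  moreover have "restrict (\<lambda>y. f (restrict (\<lambda>y. \<phi> (l y)) Y y)) Y \<in> G" if f: "f \<in> F" for f
  proof -
    have "restrict (\<lambda>z. f (\<phi> z)) Z \<in> H" using p f by (auto simp: Mor_def)
    then have "restrict (\<lambda>y. restrict (\<lambda>z. f (\<phi> z)) Z (l y)) Y \<in> G" using l by (auto simp: Mor_def)
    moreover have "restrict (\<lambda>y. restrict (\<lambda>z. f (\<phi> z)) Z (l y)) Y
        = restrict (\<lambda>y. f (restrict (\<lambda>y. \<phi> (l y)) Y y)) Y" using lZ by (auto simp: restrict_def)
    ultimately show ?thesis by simp
  qed
  ultimately show ?thesis unfolding Mor_def by auto
qed

lemma plus_mor:
  assumes l: "l \<in> Mor Y G Z H"
  shows "restrict (\<lambda>\<phi>. restrict (\<lambda>y. \<phi> (l y)) Y) (Mor Z H X F)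
     \<in> Mor (Mor Z H X F) (exp_top Z H X F) (Mor Y G X F) (exp_top Y G X F)"
  unfolding exp_top_def[of Y G X F]
  apply (rule mor_gen)
    apply (rule exp_bt)
   prefer 2 apply (rule gens_ext)
  defer apply clarify
proof -
  fix y f assume y: "y \<in> Y" and f: "f \<in> F"
  have lZ: "l y \<in> Z" using l y by (auto simp: Mor_def)
  have "restrict (\<lambda>x. restrict (\<lambda>h. f (h y)) (Mor Y G X F)
          (restrict (\<lambda>\<phi>. restrict (\<lambda>y. \<phi> (l y)) Y) (Mor Z H X F) x)) (Mor Z H X F)
       = restrict (\<lambda>h. f (h (l y))) (Mor Z H X F)"
  proof (rule restrict_ext)
    fix k assume k: "k \<in> Mor Z H X F"
    show "restrict (\<lambda>h. f (h y)) (Mor Y G X F)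
          (restrict (\<lambda>\<phi>. restrict (\<lambda>y. \<phi> (l y)) Y) (Mor Z H X F) k) = f (k (l y))"
      using comp_mor[OF l k] y k by simp
  qed
  then show "restrict (\<lambda>x. restrict (\<lambda>h. f (h y)) (Mor Y G X F)
          (restrict (\<lambda>\<phi>. restrict (\<lambda>y. \<phi> (l y)) Y) (Mor Z H X F) x)) (Mor Z H X F)
       \<in> exp_top Z H X F" using exp_gen[OF lZ f] by simp
next
  show "restrict (\<lambda>\<phi>. restrict (\<lambda>y. \<phi> (l y)) Y) (Mor Z H X F) \<in> Mor Z H X F \<rightarrow>\<^sub>E Mor Y G X F"
    using comp_mor[OF l] by auto
qed

lemma minus_mor:
  assumes p: "\<phi> \<in> Mor Z H X F"
  shows "restrict (\<lambda>l. restrict (\<lambda>y. \<phi> (l y)) Y) (Mor Y G Z H)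
     \<in> Mor (Mor Y G Z H) (exp_top Y G Z H) (Mor Y G X F) (exp_top Y G X F)"
  unfolding exp_top_def[of Y G X F]
  apply (rule mor_gen)
    apply (rule exp_bt)
   prefer 2 apply (rule gens_ext)
  defer apply clarify
proof -
  fix y f assume y: "y \<in> Y" and f: "f \<in> F"
  have fp: "restrict (\<lambda>z. f (\<phi> z)) Z \<in> H" using p f by (auto simp: Mor_def)
  have "restrict (\<lambda>x. restrict (\<lambda>h. f (h y)) (Mor Y G X F)
          (restrict (\<lambda>l. restrict (\<lambda>y. \<phi> (l y)) Y) (Mor Y G Z H) x)) (Mor Y G Z H)
       = restrict (\<lambda>h. restrict (\<lambda>z. f (\<phi> z)) Z (h y)) (Mor Y G Z H)"
  proof (rule restrict_ext)
    fix k assume k: "k \<in> Mor Y G Z H"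
    have kZ: "k y \<in> Z" using k y by (auto simp: Mor_def)
    show "restrict (\<lambda>h. f (h y)) (Mor Y G X F)
          (restrict (\<lambda>l. restrict (\<lambda>y. \<phi> (l y)) Y) (Mor Y G Z H) k) = restrict (\<lambda>z. f (\<phi> z)) Z (k y)"
      using comp_mor[OF k p] y k kZ by simp
  qed
  then show "restrict (\<lambda>x. restrict (\<lambda>h. f (h y)) (Mor Y G X F)
          (restrict (\<lambda>l. restrict (\<lambda>y. \<phi> (l y)) Y) (Mor Y G Z H) x)) (Mor Y G Z H)
       \<in> exp_top Y G Z H" using exp_gen[OF y fp] by simp
next
  show "restrict (\<lambda>l. restrict (\<lambda>y. \<phi> (l y)) Y) (Mor Y G Z H) \<in> Mor Y G Z H \<rightarrow>\<^sub>E Mor Y G X F"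
    using comp_mor[OF _ p] by auto
qed

lemma curry_mor:
  assumes bt: "bishop_topology A FA"
    and T1: "\<And>a. a \<in> A \<Longrightarrow> T a \<in> Mor B FB C FC"
    and T3: "\<And>b. b \<in> B \<Longrightarrow> restrict (\<lambda>a. T a b) A \<in> Mor A FA C FC"
  shows "restrict T A \<in> Mor A FA (Mor B FB C FC) (exp_top B FB C FC)"
  unfolding exp_top_def
  apply (rule mor_gen)
    apply (rule bt)
   prefer 2 apply (rule gens_ext)
  defer apply clarify
proof -
  fix b e assume b: "b \<in> B" and e: "e \<in> FC"
  have "restrict (\<lambda>x. restrict (\<lambda>h. e (h b)) (Mor B FB C FC) (restrict T A x)) A
      = restrict (\<lambda>a. e (restrict (\<lambda>a. T a b) A a)) A"
    using T1 by (auto simp: restrict_def)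
  also have "\<dots> \<in> FA" using T3[OF b] e by (auto simp: Mor_def)
  finally show "restrict (\<lambda>x. restrict (\<lambda>h. e (h b)) (Mor B FB C FC) (restrict T A x)) A \<in> FA" .
next
  show "restrict T A \<in> A \<rightarrow>\<^sub>E Mor B FB C FC" using T1 by auto
qed

theorem proposition11p1:
  fixes X :: "'a set" and F :: "('a \<Rightarrow> real) set"
    and Y :: "'b set" and G :: "('b \<Rightarrow> real) set"
    and Z :: "'c set" and H :: "('c \<Rightarrow> real) set"
  assumes "bishop_topology X F" and "bishop_topology Y G" and "bishop_topology Z H"
  shows "(restrict (\<lambda>l. restrict (\<lambda>\<phi>. restrict (\<lambda>y. \<phi> (l y)) Y) (Mor Z H X F)) (Mor Y G Z H)
           \<in> Mor (Mor Y G Z H) (exp_top Y G Z H)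
                 (Mor (Mor Z H X F) (exp_top Z H X F) (Mor Y G X F) (exp_top Y G X F))
                 (exp_top (Mor Z H X F) (exp_top Z H X F) (Mor Y G X F) (exp_top Y G X F))) \<and>
         (restrict (\<lambda>m. restrict (\<lambda>\<theta>. restrict (\<lambda>x. m (\<theta> x)) X) (Mor X F Z H)) (Mor Z H Y G)
           \<in> Mor (Mor Z H Y G) (exp_top Z H Y G)
                 (Mor (Mor X F Z H) (exp_top X F Z H) (Mor X F Y G) (exp_top X F Y G))
                 (exp_top (Mor X F Z H) (exp_top X F Z H) (Mor X F Y G) (exp_top X F Y G)))"
proof
  show "(restrict (\<lambda>l. restrict (\<lambda>\<phi>. restrict (\<lambda>y. \<phi> (l y)) Y) (Mor Z H X F)) (Mor Y G Z H)
           \<in> Mor (Mor Y G Z H) (exp_top Y G Z H)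
                 (Mor (Mor Z H X F) (exp_top Z H X F) (Mor Y G X F) (exp_top Y G X F))
                 (exp_top (Mor Z H X F) (exp_top Z H X F) (Mor Y G X F) (exp_top Y G X F)))"
  proof (rule curry_mor[OF exp_bt])
    fix l assume "l \<in> Mor Y G Z H"
    then show "restrict (\<lambda>\<phi>. restrict (\<lambda>y. \<phi> (l y)) Y) (Mor Z H X F)
       \<in> Mor (Mor Z H X F) (exp_top Z H X F) (Mor Y G X F) (exp_top Y G X F)" by (rule plus_mor)
  next
    fix \<phi> assume p: "\<phi> \<in> Mor Z H X F"
    have "restrict (\<lambda>l. restrict (\<lambda>\<phi>. restrict (\<lambda>y. \<phi> (l y)) Y) (Mor Z H X F) \<phi>) (Mor Y G Z H)
        = restrict (\<lambda>l. restrict (\<lambda>y. \<phi> (l y)) Y) (Mor Y G Z H)" using p by auto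
    then show "restrict (\<lambda>l. restrict (\<lambda>\<phi>. restrict (\<lambda>y. \<phi> (l y)) Y) (Mor Z H X F) \<phi>) (Mor Y G Z H)
       \<in> Mor (Mor Y G Z H) (exp_top Y G Z H) (Mor Y G X F) (exp_top Y G X F)"
      using minus_mor[OF p] by simp
  qed
next
  show "(restrict (\<lambda>m. restrict (\<lambda>\<theta>. restrict (\<lambda>x. m (\<theta> x)) X) (Mor X F Z H)) (Mor Z H Y G)
           \<in> Mor (Mor Z H Y G) (exp_top Z H Y G)
                 (Mor (Mor X F Z H) (exp_top X F Z H) (Mor X F Y G) (exp_top X F Y G))
                 (exp_top (Mor X F Z H) (exp_top X F Z H) (Mor X F Y G) (exp_top X F Y G)))"
  proof (rule curry_mor[OF exp_bt])
    fix m assume "m \<in> Mor Z H Y G"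
    then show "restrict (\<lambda>\<theta>. restrict (\<lambda>x. m (\<theta> x)) X) (Mor X F Z H)
       \<in> Mor (Mor X F Z H) (exp_top X F Z H) (Mor X F Y G) (exp_top X F Y G)" by (rule minus_mor)
  next
    fix \<theta> assume t: "\<theta> \<in> Mor X F Z H"
    have "restrict (\<lambda>m. restrict (\<lambda>\<theta>. restrict (\<lambda>x. m (\<theta> x)) X) (Mor X F Z H) \<theta>) (Mor Z H Y G)
        = restrict (\<lambda>m. restrict (\<lambda>x. m (\<theta> x)) X) (Mor Z H Y G)" using t by auto
    then show "restrict (\<lambda>m. restrict (\<lambda>\<theta>. restrict (\<lambda>x. m (\<theta> x)) X) (Mor X F Z H) \<theta>) (Mor Z H Y G)
       \<in> Mor (Mor Z H Y G) (exp_top Z H Y G) (Mor X F Y G) (exp_top X F Y G)"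
      using plus_mor[OF t] by simp
  qed
qed

end
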